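(* Let $G=G_1\times G_2$ be a product of commutative groups, $1<p<\infty$, and $f$ a nonnegative function in $\ell^1(G)$. For $x\in G_1$ define $f_x(y)=f(x,y)$, a function on $G_2$, and let $g(x)=\gamma_p(f_x)$ (computed in $G_2$), a function on $G_1$. Then $\gamma_p(f)\ge\gamma_p(g)$, where $\gamma_p(g)$ is computed in $G_1$.
   Context: For nonnegative functions $f,g$ on a commutative group $K$, $(f\star g)(x)=\max_t f(t)g(x-t)$. For nonnegative $f\in\ell^1(K)$ and $1/p+1/q=1$, $\gamma_p(f)=\inf_{g,h}\frac{\|f\star g\star h\|_1}{\|g\|_p\|h\|_q}$, infimum over nonzero nonnegative $g,h\in\ell^1(K)$. *)

theory Defs
  imports "HOL-Analysis.Analysis" "HOL-Library.Product_Plus"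
begin

text \<open>For nonnegative l1 functions the supremum is attained
  (or everything is 0), so the supremum is the maximum.\<close>
definition maxconv :: "('a::ab_group_add \<Rightarrow> real) \<Rightarrow> ('a \<Rightarrow> real) \<Rightarrow> 'a \<Rightarrow> real" where
  "maxconv f g x = (SUP t. f t * g (x - t))"

definition nonneg_l1 :: "('a \<Rightarrow> real) \<Rightarrow> bool" where
  "nonneg_l1 f \<longleftrightarrow> (\<forall>x. 0 \<le> f x) \<and> f summable_on UNIV"

definition lnorm1 :: "('a \<Rightarrow> real) \<Rightarrow> real" where
  "lnorm1 f = (\<Sum>\<^sub>\<infinity>x. \<bar>f x\<bar>)"

definition lpnorm :: "real \<Rightarrow> ('a \<Rightarrow> real) \<Rightarrow> real" where
  "lpnorm p f = (\<Sum>\<^sub>\<infinity>x. \<bar>f x\<bar> powr p) powr (1 / p)"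

definition conj_exp :: "real \<Rightarrow> real" where
  "conj_exp p = p / (p - 1)"

definition gamma_p :: "real \<Rightarrow> ('a::ab_group_add \<Rightarrow> real) \<Rightarrow> real" where
  "gamma_p p f = Inf {lnorm1 (maxconv (maxconv f g) h) / (lpnorm p g * lpnorm (conj_exp p) h) | g h.
      nonneg_l1 g \<and> nonneg_l1 h \<and> g \<noteq> (\<lambda>_. 0) \<and> h \<noteq> (\<lambda>_. 0)}"

end

theory Submission
  imports Defs
begin

lemma sup_le:
  fixes \<phi> :: "'a \<Rightarrow> real"
  assumes "\<And>t. \<phi> t \<le> B" shows "(SUP t. \<phi> t) \<le> B"
  by (rule cSUP_least) (auto simp: assms)

lemma le_sup:
  fixes \<phi> :: "'a \<Rightarrow> real"
  assumes "\<And>t. \<phi> t \<le> B" shows "\<phi> t \<le> (SUP t. \<phi> t)"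
  by (rule cSUP_upper) (auto intro: bdd_aboveI2[where M=B] assms)

lemma nonneg_l1_le:
  assumes "nonneg_l1 a" shows "a x \<le> infsum a UNIV"
proof -
  have "sum a {x} \<le> infsum a UNIV"
    by (rule finite_sum_le_infsum) (use assms in \<open>auto simp: nonneg_l1_def\<close>)
  then show ?thesis by simp
qed

lemma nonneg_l1_sum_le:
  assumes "nonneg_l1 a" "finite A" shows "sum a A \<le> infsum a UNIV"
  by (rule finite_sum_le_infsum) (use assms in \<open>auto simp: nonneg_l1_def\<close>)

lemma conv_term:
  fixes a b :: "'a::ab_group_add \<Rightarrow> real"
  assumes "nonneg_l1 a" "nonneg_l1 b"
  shows "0 \<le> a t * b (z - t)" "a t * b (z - t) \<le> infsum a UNIV * infsum b UNIV"
proof -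
  show "0 \<le> a t * b (z - t)" using assms by (simp add: nonneg_l1_def)
  show "a t * b (z - t) \<le> infsum a UNIV * infsum b UNIV"
    by (rule mult_mono) (use assms nonneg_l1_le[OF assms(1)] nonneg_l1_le[OF assms(2)] in \<open>auto simp: nonneg_l1_def intro: infsum_nonneg\<close>)
qed

lemma conv_bounds:
  fixes a b :: "'a::ab_group_add \<Rightarrow> real"
  assumes "nonneg_l1 a" "nonneg_l1 b"
  shows "0 \<le> maxconv a b z" "maxconv a b z \<le> infsum a UNIV * infsum b UNIV"
proof -
  show "maxconv a b z \<le> infsum a UNIV * infsum b UNIV"
    unfolding maxconv_def by (rule sup_le) (rule conv_term[OF assms])
  have "a 0 * b (z - 0) \<le> maxconv a b z"
    unfolding maxconv_def by (rule le_sup) (rule conv_term[OF assms])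
  then show "0 \<le> maxconv a b z" using conv_term(1)[OF assms, of 0 z] by linarith
qed

lemma conv_l1:
  fixes a b :: "'a::ab_group_add \<Rightarrow> real"
  assumes A: "nonneg_l1 a" and B: "nonneg_l1 b"
  shows "nonneg_l1 (maxconv a b)"
proof -
  define Ma where "Ma = infsum a UNIV"
  define Mb where "Mb = infsum b UNIV"
  have a0: "\<And>x. 0 \<le> a x" and b0: "\<And>x. 0 \<le> b x" using A B by (auto simp: nonneg_l1_def)
  have Mb0: "0 \<le> Mb" unfolding Mb_def by (rule infsum_nonneg) (simp add: b0)
  define k where "k = (\<lambda>(z, t). a t * b (z - t))"
  have ksum: "k summable_on UNIV"
  proof (rule nonneg_bdd_above_summable_on)
    show "\<And>x. x \<in> UNIV \<Longrightarrow> 0 \<le> k x" by (auto simp: k_def a0 b0)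
    show "bdd_above (sum k ` {F. F \<subseteq> UNIV \<and> finite F})"
    proof (rule bdd_aboveI2[where M="Ma * Mb"])
      fix P assume "P \<in> {F. F \<subseteq> (UNIV::('a\<times>'a) set) \<and> finite F}"
      then have P: "finite P" by auto
      define Z where "Z = fst ` P"
      define T where "T = snd ` P"
      have fin: "finite Z" "finite T" using P by (auto simp: Z_def T_def)
      have "sum k P \<le> sum k (Z \<times> T)"
        by (rule sum_mono2) (use fin in \<open>auto simp: Z_def T_def k_def a0 b0 intro: rev_image_eqI\<close>)
      also have "\<dots> = (\<Sum>t\<in>T. a t * (\<Sum>z\<in>Z. b (z - t)))"
        by (simp add: sum.cartesian_product[symmetric] k_def sum_distrib_left sum.swap[of _ Z T])
      also have "\<dots> \<le> (\<Sum>t\<in>T. a t * Mb)"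
      proof (rule sum_mono, rule mult_left_mono)
        fix t
        have "(\<Sum>z\<in>Z. b (z - t)) = sum b ((\<lambda>z. z - t) ` Z)"
          by (subst sum.reindex) (auto simp: inj_on_def)
        also have "\<dots> \<le> Mb" unfolding Mb_def by (rule nonneg_l1_sum_le[OF B]) (use fin in auto)
        finally show "(\<Sum>z\<in>Z. b (z - t)) \<le> Mb" .
      qed (simp add: a0)
      also have "\<dots> = (\<Sum>t\<in>T. a t) * Mb" by (simp add: sum_distrib_right)
      also have "\<dots> \<le> Ma * Mb"
        by (rule mult_right_mono) (use nonneg_l1_sum_le[OF A] fin Mb0 in \<open>auto simp: Ma_def\<close>)
      finally show "sum k P \<le> Ma * Mb" .
    qed
  qed
  define c where "c = (\<lambda>z. infsum (\<lambda>t. a t * b (z - t)) UNIV)"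
  have csum: "c summable_on UNIV"
    using summable_on_Sigma_banach[of "\<lambda>z t. a t * b (z - t)" UNIV "\<lambda>_. UNIV"] ksum
    by (simp add: c_def k_def)
  have le: "maxconv a b z \<le> c z" for z
    unfolding maxconv_def
  proof (rule sup_le)
    fix t
    have s: "(\<lambda>t. a t * b (z - t)) summable_on UNIV"
    proof (rule summable_on_comparison_test)
      show "(\<lambda>t. a t * Mb) summable_on UNIV"
        by (rule summable_on_cmult_left) (use A in \<open>simp add: nonneg_l1_def\<close>)
      show "\<And>t. t \<in> UNIV \<Longrightarrow> a t * b (z - t) \<le> a t * Mb"
        by (rule mult_left_mono) (use nonneg_l1_le[OF B] a0 in \<open>auto simp: Mb_def\<close>)
    qed (simp add: a0 b0)
    have "sum (\<lambda>t. a t * b (z - t)) {t} \<le> c z"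
      unfolding c_def by (rule finite_sum_le_infsum[OF s]) (auto simp: a0 b0)
    then show "a t * b (z - t) \<le> c z" by simp
  qed
  have "maxconv a b summable_on UNIV"
    by (rule summable_on_comparison_test[OF csum]) (use le conv_bounds(1)[OF A B] in auto)
  then show ?thesis using conv_bounds(1)[OF A B] by (auto simp: nonneg_l1_def)
qed

lemma section_l1:
  fixes g :: "'a \<times> 'b \<Rightarrow> real"
  assumes "nonneg_l1 g" shows "nonneg_l1 (\<lambda>y. g (x, y))"
proof -
  have "(\<lambda>(x,y). g (x,y)) summable_on Sigma UNIV (\<lambda>_. UNIV)"
    using assms by (simp add: nonneg_l1_def)
  from summable_on_SigmaD1[OF this, of x] show ?thesis
    using assms by (simp add: nonneg_l1_def)
qed


lemma powr_le_lin:
  fixes v M r :: real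
  assumes "0 \<le> v" "v \<le> M" "1 \<le> r"
  shows "v powr r \<le> M powr (r - 1) * v"
proof (cases "v = 0")
  case True then show ?thesis by simp
next
  case False
  have "v powr r = v powr ((r - 1) + 1)" by simp
  also have "\<dots> = v powr (r - 1) * v powr 1" by (rule powr_add)
  also have "\<dots> = v powr (r - 1) * v" using assms by (simp add: powr_one)
  also have "\<dots> \<le> M powr (r - 1) * v"
    by (rule mult_right_mono) (use assms in \<open>auto intro: powr_mono2\<close>)
  finally show ?thesis .
qed

lemma lp_summable:
  assumes "nonneg_l1 g" "1 \<le> r"
  shows "(\<lambda>z. \<bar>g z\<bar> powr r) summable_on UNIV"
proof (rule summable_on_comparison_test)
  show "(\<lambda>z. (infsum g UNIV) powr (r - 1) * g z) summable_on UNIV"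
    by (rule summable_on_cmult_right) (use assms in \<open>simp add: nonneg_l1_def\<close>)
  show "\<And>z. z \<in> UNIV \<Longrightarrow> \<bar>g z\<bar> powr r \<le> (infsum g UNIV) powr (r - 1) * g z"
    using powr_le_lin nonneg_l1_le[OF assms(1)] assms by (auto simp: nonneg_l1_def)
qed simp

lemma lpnorm_zero [simp]: "lpnorm r (\<lambda>_. 0) = 0"
  by (simp add: lpnorm_def)

lemma lpnorm_nonneg: "0 \<le> lpnorm r g"
  by (simp add: lpnorm_def)

lemma lnorm1_nonneg: "0 \<le> lnorm1 g"
  unfolding lnorm1_def by (rule infsum_nonneg) simp

lemma lpnorm_le_l1:
  assumes g: "nonneg_l1 g" and r: "1 \<le> r"
  shows "lpnorm r g \<le> infsum g UNIV"
proof -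
  define S where "S = infsum g UNIV"
  have g0: "\<And>x. 0 \<le> g x" using g by (auto simp: nonneg_l1_def)
  have S0: "0 \<le> S" unfolding S_def by (rule infsum_nonneg) (simp add: g0)
  have "infsum (\<lambda>z. \<bar>g z\<bar> powr r) UNIV \<le> infsum (\<lambda>z. S powr (r - 1) * g z) UNIV"
  proof (rule infsum_mono)
    show "(\<lambda>z. \<bar>g z\<bar> powr r) summable_on UNIV" by (rule lp_summable[OF g r])
    show "(\<lambda>z. S powr (r - 1) * g z) summable_on UNIV"
      by (rule summable_on_cmult_right) (use g in \<open>simp add: nonneg_l1_def\<close>)
    show "\<And>z. z \<in> UNIV \<Longrightarrow> \<bar>g z\<bar> powr r \<le> S powr (r - 1) * g z"
      using powr_le_lin nonneg_l1_le[OF g] g0 r by (auto simp: S_def)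
  qed
  also have "\<dots> = S powr (r - 1) * S" unfolding S_def
    by (rule infsum_cmult_right) (use g in \<open>simp add: nonneg_l1_def\<close>)
  also have "\<dots> = S powr r"
  proof -
    have "S powr (r - 1) * S = S powr (r - 1) * S powr 1" using S0 by (simp add: powr_one)
    also have "\<dots> = S powr ((r - 1) + 1)" by (rule powr_add[symmetric])
    also have "\<dots> = S powr r" by simp
    finally show ?thesis .
  qed
  finally have *: "infsum (\<lambda>z. \<bar>g z\<bar> powr r) UNIV \<le> S powr r" .
  have "lpnorm r g \<le> (S powr r) powr (1 / r)"
    unfolding lpnorm_def
    by (rule powr_mono2) (use * r in \<open>auto intro: infsum_nonneg\<close>)
  also have "\<dots> = S" using r S0 by (simp add: powr_powr powr_one)
  finally show ?thesis by (simp add: S_def)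
qed

lemma section_norm:
  fixes g :: "'a \<times> 'b \<Rightarrow> real"
  assumes g: "nonneg_l1 g" and r: "1 \<le> r"
  defines "G \<equiv> (\<lambda>x. lpnorm r (\<lambda>y. g (x, y)))"
  shows "nonneg_l1 G" "lpnorm r G = lpnorm r g" "g \<noteq> (\<lambda>_. 0) \<Longrightarrow> G \<noteq> (\<lambda>_. 0)"
proof -
  have g0: "\<And>x. 0 \<le> g x" using g by (auto simp: nonneg_l1_def)
  have Ssum: "(\<lambda>x. infsum (\<lambda>y. g (x, y)) UNIV) summable_on UNIV"
    using summable_on_Sigma_banach[of "\<lambda>x y. g (x, y)" UNIV "\<lambda>_. UNIV"] g
    by (simp add: nonneg_l1_def)
  have "G summable_on UNIV"
  proof (rule summable_on_comparison_test[OF Ssum])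
    show "\<And>x. x \<in> UNIV \<Longrightarrow> G x \<le> infsum (\<lambda>y. g (x, y)) UNIV"
      unfolding G_def using lpnorm_le_l1[OF section_l1[OF g] r] by auto
  qed (simp add: G_def lpnorm_nonneg)
  then show "nonneg_l1 G" by (simp add: nonneg_l1_def G_def lpnorm_nonneg)
  have inner: "\<And>x. (\<lambda>y. \<bar>g (x, y)\<bar> powr r) summable_on UNIV"
    using lp_summable[OF section_l1[OF g] r] by simp
  have eq: "\<bar>G x\<bar> powr r = infsum (\<lambda>y. \<bar>g (x, y)\<bar> powr r) UNIV" for x
  proof -
    have "\<bar>G x\<bar> powr r = (infsum (\<lambda>y. \<bar>g (x, y)\<bar> powr r) UNIV) powr (1 / r * r)"
      by (simp add: G_def lpnorm_def powr_powr)
    also have "\<dots> = infsum (\<lambda>y. \<bar>g (x, y)\<bar> powr r) UNIV"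
      using r by (simp add: powr_one infsum_nonneg)
    finally show ?thesis .
  qed
  have "infsum (\<lambda>x. \<bar>G x\<bar> powr r) UNIV = infsum (\<lambda>x. infsum (\<lambda>y. \<bar>g (x, y)\<bar> powr r) UNIV) UNIV"
    by (simp add: eq)
  also have "\<dots> = infsum (\<lambda>z. \<bar>g z\<bar> powr r) UNIV"
    using infsum_Sigma_banach[of "\<lambda>z. \<bar>g z\<bar> powr r" UNIV "\<lambda>_. UNIV"] lp_summable[OF g r]
    by simp
  finally show "lpnorm r G = lpnorm r g" by (simp add: lpnorm_def)
  assume "g \<noteq> (\<lambda>_. 0)"
  then obtain x y where "g (x, y) \<noteq> 0" by fastforce
  then have gp: "0 < g (x, y)" using g0[of "(x,y)"] by linarith
  have "\<bar>g (x, y)\<bar> powr r \<le> infsum (\<lambda>y. \<bar>g (x, y)\<bar> powr r) UNIV"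
    using finite_sum_le_infsum[OF inner, of "{y}"] by simp
  moreover have "0 < \<bar>g (x, y)\<bar> powr r" using gp by simp
  ultimately have "0 < infsum (\<lambda>y. \<bar>g (x, y)\<bar> powr r) UNIV"
    by linarith
  then have "0 < \<bar>G x\<bar> powr r" using eq[of x] by simp
  then have "G x \<noteq> 0" by simp
  then show "G \<noteq> (\<lambda>_. 0)" by auto
qed


lemma delta_l1: "nonneg_l1 (\<lambda>z::'a::zero. if z = 0 then 1 else (0::real))"
  unfolding nonneg_l1_def
  by (auto intro!: finite_nonzero_values_imp_summable_on finite_subset[of _ "{0}"] split: if_splits)

lemma gamma_set_ne:
  "{lnorm1 (maxconv (maxconv f g) h) / (lpnorm p g * lpnorm (conj_exp p) h) | g h.
      nonneg_l1 g \<and> nonneg_l1 h \<and> g \<noteq> (\<lambda>_. 0) \<and> h \<noteq> (\<lambda>_. 0)} \<noteq> {}"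
proof -
  let ?d = "\<lambda>z::'a::ab_group_add. if z = 0 then 1 else (0::real)"
  have "?d \<noteq> (\<lambda>_. 0)" by (metis one_neq_zero)
  then show ?thesis using delta_l1 by blast
qed

lemma gamma_nonneg: "0 \<le> gamma_p p f"
  unfolding gamma_p_def
  by (rule cInf_greatest[OF gamma_set_ne])
     (auto intro!: divide_nonneg_nonneg mult_nonneg_nonneg lnorm1_nonneg lpnorm_nonneg)

lemma gamma_lower:
  assumes "nonneg_l1 g" "nonneg_l1 h" "g \<noteq> (\<lambda>_. 0)" "h \<noteq> (\<lambda>_. 0)"
  shows "gamma_p p f \<le> lnorm1 (maxconv (maxconv f g) h) / (lpnorm p g * lpnorm (conj_exp p) h)"
  unfolding gamma_p_def
proof (rule cInf_lower)
  show "bdd_below {lnorm1 (maxconv (maxconv f g) h) / (lpnorm p g * lpnorm (conj_exp p) h) | g h.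
      nonneg_l1 g \<and> nonneg_l1 h \<and> g \<noteq> (\<lambda>_. 0) \<and> h \<noteq> (\<lambda>_. 0)}"
    by (rule bdd_belowI[where m=0])
       (auto intro!: divide_nonneg_nonneg mult_nonneg_nonneg lnorm1_nonneg lpnorm_nonneg)
qed (use assms in blast)

lemma key_pointwise:
  fixes f g h :: "'a::ab_group_add \<times> 'b::ab_group_add \<Rightarrow> real"
  assumes f: "nonneg_l1 f" and g: "nonneg_l1 g" and h: "nonneg_l1 h"
  shows "maxconv (maxconv (\<lambda>y. f (s, y)) (\<lambda>y. g (t, y))) (\<lambda>y. h (u, y)) y
         \<le> maxconv (maxconv f g) h (s + t + u, y)"
proof -
  have fg: "nonneg_l1 (maxconv f g)" by (rule conv_l1[OF f g])
  have h0: "\<And>z. 0 \<le> h z" using h by (auto simp: nonneg_l1_def)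
  have inner: "maxconv (\<lambda>y. f (s, y)) (\<lambda>y. g (t, y)) b \<le> maxconv f g (s + t, b)" for b
    unfolding maxconv_def[of "\<lambda>y. f (s, y)"]
  proof (rule sup_le)
    fix c
    have "f (s, c) * g ((s + t, b) - (s, c)) \<le> maxconv f g (s + t, b)"
      unfolding maxconv_def by (rule le_sup) (rule conv_term[OF f g])
    then show "f (s, c) * g (t, b - c) \<le> maxconv f g (s + t, b)" by simp
  qed
  show ?thesis
    unfolding maxconv_def[of "maxconv (\<lambda>y. f (s, y)) (\<lambda>y. g (t, y))"]
  proof (rule sup_le)
    fix b
    have "maxconv (\<lambda>y. f (s, y)) (\<lambda>y. g (t, y)) b * h (u, y - b)
          \<le> maxconv f g (s + t, b) * h ((s + t + u, y) - (s + t, b))"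
      using mult_right_mono[OF inner h0] by simp
    also have "\<dots> \<le> maxconv (maxconv f g) h (s + t + u, y)"
      unfolding maxconv_def[of "maxconv f g"] by (rule le_sup) (rule conv_term[OF fg h])
    finally show "maxconv (\<lambda>y. f (s, y)) (\<lambda>y. g (t, y)) b * h (u, y - b)
          \<le> maxconv (maxconv f g) h (s + t + u, y)" .
  qed
qed


theorem mainTheorem13:
  fixes f :: "('a::ab_group_add \<times> 'b::ab_group_add) \<Rightarrow> real" and p :: real
  assumes "1 < p" and "nonneg_l1 f"
  shows "gamma_p p f \<ge> gamma_p p (\<lambda>x. gamma_p p (\<lambda>y. f (x, y)))"
proof -
  note p1 = assms(1) and f = assms(2)
  define gt where "gt = (\<lambda>x. gamma_p p (\<lambda>y. f (x, y)))"
  define q where "q = conj_exp p"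
  have p1': "1 \<le> p" using p1 by simp
  have q1: "1 \<le> q" using p1 by (simp add: q_def conj_exp_def field_simps)
  have gt0: "\<And>s. 0 \<le> gt s" by (simp add: gt_def gamma_nonneg)
  have main: "gamma_p p gt \<le> lnorm1 (maxconv (maxconv f g) h) / (lpnorm p g * lpnorm q h)"
    if g: "nonneg_l1 g" and h: "nonneg_l1 h" and gnz: "g \<noteq> (\<lambda>_. 0)" and hnz: "h \<noteq> (\<lambda>_. 0)"
    for g h :: "'a \<times> 'b \<Rightarrow> real"
  proof -
    define F where "F = maxconv (maxconv f g) h"
    have Fl1: "nonneg_l1 F" unfolding F_def by (intro conv_l1 f g h)
    have F0: "\<And>z. 0 \<le> F z" using Fl1 by (auto simp: nonneg_l1_def)
    define A where "A = (\<lambda>x. infsum (\<lambda>y. F (x, y)) UNIV)"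
    have Asum: "A summable_on UNIV"
      using summable_on_Sigma_banach[of "\<lambda>x y. F (x, y)" UNIV "\<lambda>_. UNIV"] Fl1
      by (simp add: nonneg_l1_def A_def)
    have lnF: "lnorm1 F = infsum A UNIV"
      using infsum_Sigma_banach[of F UNIV "\<lambda>_. UNIV"] Fl1
      by (simp add: nonneg_l1_def A_def lnorm1_def F0)
    have A0: "\<And>x. 0 \<le> A x" unfolding A_def by (rule infsum_nonneg) (simp add: F0)
    define G where "G = (\<lambda>x. lpnorm p (\<lambda>y. g (x, y)))"
    define H where "H = (\<lambda>x. lpnorm q (\<lambda>y. h (x, y)))"
    note Gp = section_norm[OF g p1', folded G_def]
    note Hp = section_norm[OF h q1, folded H_def]
    have G0: "\<And>x. 0 \<le> G x" and H0: "\<And>x. 0 \<le> H x" by (simp_all add: G_def H_def lpnorm_nonneg)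
    have key: "gt s * G t * H u \<le> A (s + t + u)" for s t u
    proof (cases "(\<lambda>y. g (t, y)) = (\<lambda>_. 0) \<or> (\<lambda>y. h (u, y)) = (\<lambda>_. 0)")
      case True
      then have "G t * H u = 0" by (auto simp: G_def H_def)
      then show ?thesis using A0[of "s + t + u"] by (auto simp: mult.assoc)
    next
      case False
      define L where "L = lnorm1 (maxconv (maxconv (\<lambda>y. f (s, y)) (\<lambda>y. g (t, y))) (\<lambda>y. h (u, y)))"
      have gl: "gt s \<le> L / (G t * H u)"
        unfolding gt_def L_def G_def H_def q_def
        by (rule gamma_lower) (use False section_l1[OF g] section_l1[OF h] in auto)
      have Kl1: "nonneg_l1 (maxconv (maxconv (\<lambda>y. f (s, y)) (\<lambda>y. g (t, y))) (\<lambda>y. h (u, y)))"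
        by (intro conv_l1 section_l1 f g h)
      have LA: "L \<le> A (s + t + u)"
        unfolding L_def lnorm1_def A_def
      proof (rule infsum_mono)
        show "(\<lambda>y. \<bar>maxconv (maxconv (\<lambda>y. f (s, y)) (\<lambda>y. g (t, y))) (\<lambda>y. h (u, y)) y\<bar>) summable_on UNIV"
          using Kl1 by (simp add: nonneg_l1_def)
        show "(\<lambda>y. F (s + t + u, y)) summable_on UNIV"
          using section_l1[OF Fl1] by (simp add: nonneg_l1_def)
        fix y
        show "\<bar>maxconv (maxconv (\<lambda>y. f (s, y)) (\<lambda>y. g (t, y))) (\<lambda>y. h (u, y)) y\<bar> \<le> F (s + t + u, y)"
          using Kl1 key_pointwise[OF f g h, of s t u y] by (simp add: nonneg_l1_def F_def)
      qed
      show ?thesis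
      proof (cases "G t * H u = 0")
        case True
        then show ?thesis using A0[of "s + t + u"] by (auto simp: mult.assoc)
      next
        case False
        then have pos: "0 < G t * H u" using G0 H0 by (simp add: less_le)
        have "gt s * (G t * H u) \<le> L" using gl pos by (simp add: pos_le_divide_eq)
        then show ?thesis using LA by (simp add: mult.assoc)
      qed
    qed
    define K where "K = maxconv (maxconv gt G) H"
    have trm: "0 \<le> maxconv gt G w * H (x - w) \<and> maxconv gt G w * H (x - w) \<le> A x" for x w
    proof (cases "H (x - w) = 0")
      case True then show ?thesis using A0 by simp
    next
      case False
      then have Hp': "0 < H (x - w)" using H0 by (simp add: less_le)
      have tb: "gt s * G (w - s) \<le> A x / H (x - w)" for s
      proof -
        have "gt s * G (w - s) * H (x - w) \<le> A (s + (w - s) + (x - w))" by (rule key)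
        then show ?thesis using Hp' by (simp add: pos_le_divide_eq)
      qed
      have ub: "maxconv gt G w \<le> A x / H (x - w)" unfolding maxconv_def by (rule sup_le) (rule tb)
      have "gt 0 * G (w - 0) \<le> maxconv gt G w" unfolding maxconv_def by (rule le_sup) (rule tb)
      then have lb: "0 \<le> maxconv gt G w" using gt0[of 0] G0[of w] by (smt (verit) mult_nonneg_nonneg diff_zero)
      show ?thesis using ub lb Hp' by (simp add: pos_le_divide_eq mult_nonneg_nonneg)
    qed
    have KA: "0 \<le> K x \<and> K x \<le> A x" for x
    proof -
      have "K x \<le> A x" unfolding K_def maxconv_def[of "maxconv gt G"] by (rule sup_le) (use trm in blast)
      moreover have "maxconv gt G 0 * H (x - 0) \<le> K x"
        unfolding K_def maxconv_def[of "maxconv gt G"] by (rule le_sup) (use trm in blast)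
      ultimately show ?thesis using trm[of 0 x] by linarith
    qed
    have lnK0: "lnorm1 K \<le> infsum A UNIV"
      unfolding lnorm1_def
    proof (rule infsum_mono[OF _ Asum])
      show "(\<lambda>x. \<bar>K x\<bar>) summable_on UNIV"
        by (rule summable_on_comparison_test[OF Asum]) (use KA in auto)
    qed (use KA in auto)
    have lnK: "lnorm1 K \<le> lnorm1 F" using lnK0 lnF by simp
    have "gamma_p p gt \<le> lnorm1 K / (lpnorm p G * lpnorm q H)"
      unfolding K_def q_def by (rule gamma_lower) (use Gp Hp gnz hnz in auto)
    also have "\<dots> = lnorm1 K / (lpnorm p g * lpnorm q h)" using Gp Hp by simp
    also have "\<dots> \<le> lnorm1 F / (lpnorm p g * lpnorm q h)"
      by (rule divide_right_mono[OF lnK]) (simp add: lpnorm_nonneg)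
    finally show ?thesis by (simp add: F_def)
  qed
  show ?thesis
    unfolding gamma_p_def[of p f] gt_def[symmetric]
    by (rule cInf_greatest[OF gamma_set_ne]) (use main in \<open>auto simp: q_def\<close>)
qed

end
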